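(* Let $N, M_d\ge 1$ be integers, let $P_s,P_r,\sigma_r^2,\sigma_d^2>0$ and $\varepsilon\ge 0$ be real numbers, let $\tilde{\mathbf H}_{rd}\in\mathbb C^{M_d\times N}$ and let $\mathbf g\in\mathbb C^{N}$ with $\mathbf g\neq\mathbf 0$. Consider the optimization problem $$\max_{\mathbf W\in\mathbb C^{N\times N},\,\mathbf r\in\mathbb C^{M_d}}\ \min_{\Delta\mathbf H\in\mathbb C^{M_d\times N},\ \|\Delta \mathbf H\|_F\leq \varepsilon}\ \frac{P_s|\mathbf r^H(\tilde {\mathbf H}_{rd}+\Delta \mathbf H)\mathbf W\mathbf g|^2}{\sigma_r^2\|\mathbf r^H(\tilde {\mathbf H}_{rd}+\Delta \mathbf H)\mathbf W\|_2^2+\sigma_d^2}$$ subject to $[P_s\mathbf W\mathbf g\mathbf g^H\mathbf W^H+\sigma_r^2\mathbf W\mathbf W^H]_{i,i}\leq P_r$ for all $i=1,\dots,N$, and $\|\mathbf r\|_2=1$. Then the optimal $\mathbf W$ of this problem is given by $$\mathbf W=\frac{\tilde P_r}{\|\mathbf g\|_2}\,\mathbf w\, \mathbf g^H$$ for some $\mathbf w=[w_1,\dots,w_N]^T\in\mathbb C^N$, where $\tilde P_r= \sqrt{\frac{P_r}{P_s\|\mathbf g\|_2^2+\sigma_r^2}}$.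
   Context: $[\mathbf A]_{i,i}$ denotes the $i$-th diagonal entry of a matrix $\mathbf A$; $(\cdot)^H$ is the conjugate transpose; $\|\cdot\|_2$ is the Euclidean norm and $\|\cdot\|_F$ the Frobenius norm. This problem models a two-hop amplify-and-forward relay with $N$ relay antennas, relay beamforming matrix $\mathbf W$, receive beamformer $\mathbf r$, effective first-hop channel $\mathbf g$, estimated second-hop channel $\tilde{\mathbf H}_{rd}$ with norm-bounded error $\Delta\mathbf H$, and per-antenna relay power limit $P_r$. *)

theory Defs
  imports "HOL-Analysis.Analysis"
begin

text \<open>Matrices are complex^'cols^'rows (A $ i $ j is the entry in row i, column j);
  column vectors are complex^'k.  The dimensions N and M_d are the cardinalities
  of the finite index types.\<close>

definition conj_transpose :: "complex^'n^'m \<Rightarrow> complex^'m^'n" where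
  "conj_transpose A = (\<chi> i j. cnj (A $ j $ i))"

definition outer :: "complex^'m \<Rightarrow> complex^'n \<Rightarrow> complex^'n^'m" where
  "outer x y = (\<chi> i j. x $ i * cnj (y $ j))"

definition hinner :: "complex^'m \<Rightarrow> complex^'m \<Rightarrow> complex" where
  "hinner r x = (\<Sum>i\<in>UNIV. cnj (r $ i) * x $ i)"

text \<open>r^H A, represented as a vector (the entries of the row vector)\<close>
definition hrow :: "complex^'m \<Rightarrow> complex^'n^'m \<Rightarrow> complex^'n" where
  "hrow r A = (\<chi> j. \<Sum>i\<in>UNIV. cnj (r $ i) * A $ i $ j)"

definition frob_norm :: "complex^'n^'m \<Rightarrow> real" where
  "frob_norm A = sqrt (\<Sum>i\<in>UNIV. \<Sum>j\<in>UNIV. (cmod (A $ i $ j))\<^sup>2)"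

definition sinr :: "real \<Rightarrow> real \<Rightarrow> real \<Rightarrow> complex^'n^'m \<Rightarrow> complex^'n
     \<Rightarrow> complex^'n^'n \<Rightarrow> complex^'m \<Rightarrow> complex^'n^'m \<Rightarrow> real" where
  "sinr Ps sr sd Ht g W r dH =
     Ps * (cmod (hinner r (((Ht + dH) ** W) *v g)))\<^sup>2 /
     (sr\<^sup>2 * (norm (hrow r ((Ht + dH) ** W)))\<^sup>2 + sd\<^sup>2)"

definition robust_sinr :: "real \<Rightarrow> real \<Rightarrow> real \<Rightarrow> real \<Rightarrow> complex^'n^'m \<Rightarrow> complex^'n
     \<Rightarrow> complex^'n^'n \<Rightarrow> complex^'m \<Rightarrow> real" where
  "robust_sinr Ps sr sd eps Ht g W r =
     (INF dH \<in> {dH :: complex^'n^'m. frob_norm dH \<le> eps}. sinr Ps sr sd Ht g W r dH)"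

text \<open>Feasibility: per-antenna relay power constraint and unit-norm receive beamformer.
  The diagonal entries of the Hermitian matrix are real, so comparing the real part is exact.\<close>
definition feasible :: "real \<Rightarrow> real \<Rightarrow> real \<Rightarrow> complex^'n \<Rightarrow> complex^'n^'n \<Rightarrow> complex^'m \<Rightarrow> bool" where
  "feasible Ps Pr sr g W r \<longleftrightarrow>
     (\<forall>i. Re (((of_real Ps) *s (W ** outer g g ** conj_transpose W)
              + (of_real (sr\<^sup>2)) *s (W ** conj_transpose W)) $ i $ i) \<le> Pr)
     \<and> norm r = 1"

end

theory Submission
  imports Defs
begin


lemma norm_sq_vec: "(norm (x::complex^'n))\<^sup>2 = (\<Sum>i\<in>UNIV. (cmod (x$i))\<^sup>2)"
  unfolding norm_vec_def L2_set_def by (simp add: sum_nonneg)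

lemma cs_vec: "cmod (\<Sum>j\<in>UNIV. (a::complex^'n)$j * b$j) \<le> norm a * norm b"
proof -
  have "cmod (\<Sum>j\<in>UNIV. a$j * b$j) \<le> (\<Sum>j\<in>UNIV. cmod (a$j * b$j))" by (rule norm_sum)
  also have "\<dots> = (\<Sum>j\<in>UNIV. \<bar>cmod (a$j)\<bar> * \<bar>cmod (b$j)\<bar>)" by (simp add: norm_mult)
  also have "\<dots> \<le> L2_set (\<lambda>j. cmod (a$j)) UNIV * L2_set (\<lambda>j. cmod (b$j)) UNIV" by (rule L2_set_mult_ineq)
  also have "\<dots> = norm a * norm b" by (simp add: norm_vec_def)
  finally show ?thesis .
qed

lemma vof: "(of_real r :: complex^'n) $ i = complex_of_real r"
  by (simp add: of_real_def)

lemma cmod_sq': "cmod z * cmod z = Re z * Re z + Im z * Im z"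
  using cmod_power2[of z] by (simp add: power2_eq_square)

lemma diag_formula:
  fixes W :: "complex^'n^'n"
  shows "Re (((of_real Ps) *s (W ** outer g g ** conj_transpose W)
              + (of_real (sr\<^sup>2)) *s (W ** conj_transpose W)) $ i $ i)
    = Ps * (cmod ((W *v g)$i))\<^sup>2 + sr\<^sup>2 * (\<Sum>j\<in>UNIV. (cmod (W$i$j))\<^sup>2)"
proof -
  have a: "(W ** outer g g ** conj_transpose W) $ i $ i = (W *v g)$i * cnj ((W *v g)$i)"
    by (simp add: matrix_matrix_mult_def matrix_vector_mult_def outer_def conj_transpose_def
        sum_distrib_left sum_distrib_right cnj_sum mult_ac)
  have b: "(W ** conj_transpose W) $ i $ i = (\<Sum>j\<in>UNIV. W$i$j * cnj (W$i$j))"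
    by (simp add: matrix_matrix_mult_def conj_transpose_def)
  show ?thesis
    by (simp add: a b vof cmod_power2 power2_eq_square cmod_sq' del: of_real_power)
qed


lemma sum_cnj_g: "(\<Sum>j\<in>UNIV. cnj ((g::complex^'n)$j) * g$j) = complex_of_real ((norm g)\<^sup>2)"
proof -
  have "(\<Sum>j\<in>UNIV. cnj (g$j) * g$j) = (\<Sum>j\<in>UNIV. complex_of_real ((cmod (g$j))\<^sup>2))"
    by (rule sum.cong[OF refl]) (simp only: complex_norm_square mult.commute)
  also have "\<dots> = complex_of_real ((norm g)\<^sup>2)" by (simp only: norm_sq_vec of_real_sum)
  finally show ?thesis .
qed

lemma sR_comp: "(c *\<^sub>R (x::complex^'n)) $ i = of_real c * x$i"
  by (metis vector_scaleR_component scaleR_conv_of_real)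

lemma outer_mulv: "outer u g *v g = ((norm g)\<^sup>2) *\<^sub>R u"
proof -
  have *: "\<And>i. (\<Sum>j\<in>UNIV. g $ j * (u $ i * cnj (g $ j))) = u$i * (\<Sum>j\<in>UNIV. cnj (g$j) * g$j)"
    by (simp add: sum_distrib_left mult_ac)
  show ?thesis
  proof (subst vec_eq_iff, intro allI)
    fix i
    have "(outer u g *v g) $ i = (\<Sum>j\<in>UNIV. g $ j * (u $ i * cnj (g $ j)))"
      by (simp add: matrix_vector_mult_def outer_def mult_ac)
    also have "\<dots> = u$i * complex_of_real ((norm g)\<^sup>2)" using * by (simp only: sum_cnj_g)
    also have "\<dots> = (((norm g)\<^sup>2) *\<^sub>R u) $ i" by (simp only: sR_comp mult.commute)
    finally show "(outer u g *v g) $ i = (((norm g)\<^sup>2) *\<^sub>R u) $ i" .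
  qed
qed

lemma hrow_outer: "hrow r (M ** outer u g) $ j = hinner r (M *v u) * cnj (g$j)"
  by (simp add: hrow_def hinner_def matrix_matrix_mult_def matrix_vector_mult_def outer_def
      sum_distrib_left sum_distrib_right mult_ac)

lemma norm_conj_scaled: "norm (\<chi> j. c * cnj ((g::complex^'n)$j)) = cmod c * norm g"
proof -
  have "(norm (\<chi> j. c * cnj (g$j)))\<^sup>2 = (cmod c * norm g)\<^sup>2"
    by (simp add: norm_sq_vec norm_mult power_mult_distrib sum_distrib_left)
  then show ?thesis by (simp add: power2_eq_iff_nonneg)
qed

lemma hinner_hrow: "hinner r (M *v x) = (\<Sum>j\<in>UNIV. hrow r M $ j * x$j)"
  apply (simp add: hinner_def hrow_def matrix_vector_mult_def sum_distrib_left sum_distrib_right mult_ac)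
  apply (rule sum.swap)
  done

lemma hinner_scale: "hinner r (M *v (c *\<^sub>R x)) = of_real c * hinner r (M *v x)"
  by (simp add: hinner_def matrix_vector_mult_def sum_distrib_left sR_comp mult_ac)
     (simp add: scaleR_conv_of_real mult_ac)



lemma frac_mono:
  fixes N a b sr sd :: real
  assumes "0 \<le> N" "0 \<le> b" "b \<le> a" "sd > 0"
  shows "N / (sr\<^sup>2*a\<^sup>2+sd\<^sup>2) \<le> N/(sr\<^sup>2*b\<^sup>2+sd\<^sup>2)"
proof -
  have "b\<^sup>2 \<le> a\<^sup>2" using assms by (simp add: power_mono)
  then have "sr\<^sup>2*b\<^sup>2 \<le> sr\<^sup>2*a\<^sup>2" by (simp add: mult_left_mono)
  moreover have "0 < sr\<^sup>2*b\<^sup>2+sd\<^sup>2" using assms by (simp add: add_nonneg_pos)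
  ultimately show ?thesis using assms(1) by (intro divide_left_mono) auto
qed

lemma W0_mulv:
  assumes "g \<noteq> 0"
  shows "outer ((1/(norm g)\<^sup>2) *\<^sub>R (W *v g)) g *v g = W *v g"
  using assms by (simp add: outer_mulv)

lemma den_proj:
  assumes "g \<noteq> 0"
  shows "norm (hrow r (M ** outer ((1/(norm g)\<^sup>2) *\<^sub>R (W *v g)) g)) \<le> norm (hrow r (M ** W))"
proof -
  let ?u = "(1/(norm g)\<^sup>2) *\<^sub>R (W *v g)"
  let ?s = "hinner r (M *v (W *v g))"
  have ng: "norm g > 0" using assms by simp
  have "hrow r (M ** outer ?u g) = (\<chi> j. hinner r (M *v ?u) * cnj (g$j))"
    by (simp add: vec_eq_iff hrow_outer)
  then have "norm (hrow r (M ** outer ?u g)) = cmod (hinner r (M *v ?u)) * norm g"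
    by (simp add: norm_conj_scaled)
  also have "\<dots> = cmod ?s / (norm g)\<^sup>2 * norm g"
    by (simp add: hinner_scale norm_mult norm_divide norm_power)
  also have "\<dots> = cmod ?s / norm g" using ng by (simp add: power2_eq_square)
  also have "\<dots> \<le> norm (hrow r (M ** W))"
  proof -
    have "?s = (\<Sum>j\<in>UNIV. hrow r (M ** W) $ j * g$j)"
      by (simp add: matrix_vector_mul_assoc hinner_hrow)
    then have "cmod ?s \<le> norm (hrow r (M ** W)) * norm g" by (simp add: cs_vec)
    then show ?thesis using ng by (simp add: divide_le_eq)
  qed
  finally show ?thesis .
qed

lemma sinr_proj:
  assumes "g \<noteq> 0" "Ps \<ge> 0" "sd > 0"
  shows "sinr Ps sr sd Ht g W r dH \<le> sinr Ps sr sd Ht g (outer ((1/(norm g)\<^sup>2) *\<^sub>R (W *v g)) g) r dH"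
proof -
  let ?W0 = "outer ((1/(norm g)\<^sup>2) *\<^sub>R (W *v g)) g"
  have num: "((Ht + dH) ** ?W0) *v g = ((Ht + dH) ** W) *v g"
    by (simp add: W0_mulv[OF assms(1)] flip: matrix_vector_mul_assoc)
  show ?thesis unfolding sinr_def num
    by (rule frac_mono) (use assms den_proj[OF assms(1)] in auto)
qed

lemma nonneg_sinr: "Ps \<ge> 0 \<Longrightarrow> sd > 0 \<Longrightarrow> sinr Ps sr sd Ht g W r dH \<ge> 0"
  unfolding sinr_def by (intro divide_nonneg_pos) (auto intro: add_nonneg_pos)

lemma rowsum_proj:
  assumes "g \<noteq> 0"
  shows "(\<Sum>j\<in>UNIV. (cmod (outer ((1/(norm g)\<^sup>2) *\<^sub>R (W *v g)) g $ i $ j))\<^sup>2)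
         \<le> (\<Sum>j\<in>UNIV. (cmod (W$i$j))\<^sup>2)"
proof -
  let ?v = "(W *v g) $ i"
  have ng: "norm g > 0" using assms by simp
  have "(\<Sum>j\<in>UNIV. (cmod (outer ((1/(norm g)\<^sup>2) *\<^sub>R (W *v g)) g $ i $ j))\<^sup>2)
      = (\<Sum>j\<in>UNIV. (cmod ?v / (norm g)\<^sup>2)\<^sup>2 * (cmod (g$j))\<^sup>2)"
    by (simp add: outer_def sR_comp norm_mult power_mult_distrib power_divide)
  also have "\<dots> = (cmod ?v / (norm g)\<^sup>2)\<^sup>2 * (norm g)\<^sup>2"
    by (simp add: norm_sq_vec sum_distrib_left)
  also have "\<dots> = (cmod ?v / norm g)\<^sup>2" using ng by (simp add: power2_eq_square)
  also have "\<dots> \<le> (norm (W$i))\<^sup>2"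
  proof -
    have "?v = (\<Sum>j\<in>UNIV. (W$i) $ j * g$j)" by (simp add: matrix_vector_mult_def)
    then have "cmod ?v \<le> norm (W$i) * norm g" by (simp add: cs_vec)
    then have "cmod ?v / norm g \<le> norm (W$i)" using ng by (simp add: divide_le_eq)
    then show ?thesis by (simp add: power_mono)
  qed
  also have "\<dots> = (\<Sum>j\<in>UNIV. (cmod (W$i$j))\<^sup>2)" by (rule norm_sq_vec)
  finally show ?thesis .
qed

lemma feasible_proj:
  assumes "g \<noteq> 0" "feasible Ps Pr sr g W r"
  shows "feasible Ps Pr sr g (outer ((1/(norm g)\<^sup>2) *\<^sub>R (W *v g)) g) r"
  using assms(2) unfolding feasible_def diag_formula W0_mulv[OF assms(1)]
proof (intro conjI allI)
  fix i
  assume a: "(\<forall>i. Ps * (cmod ((W *v g) $ i))\<^sup>2 + sr\<^sup>2 * (\<Sum>j\<in>UNIV. (cmod (W $ i $ j))\<^sup>2) \<le> Pr) \<and> norm r = 1"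
  have "sr\<^sup>2 * (\<Sum>j\<in>UNIV. (cmod (outer ((1/(norm g)\<^sup>2) *\<^sub>R (W *v g)) g $ i $ j))\<^sup>2)
        \<le> sr\<^sup>2 * (\<Sum>j\<in>UNIV. (cmod (W$i$j))\<^sup>2)"
    by (rule mult_left_mono[OF rowsum_proj[OF assms(1)]]) simp
  then show "Ps * (cmod ((W *v g) $ i))\<^sup>2 + sr\<^sup>2 * (\<Sum>j\<in>UNIV. (cmod (outer ((1/(norm g)\<^sup>2) *\<^sub>R (W *v g)) g $ i $ j))\<^sup>2) \<le> Pr"
  proof -
    have "Ps * (cmod ((W *v g) $ i))\<^sup>2 + sr\<^sup>2 * (\<Sum>j\<in>UNIV. (cmod (W $ i $ j))\<^sup>2) \<le> Pr"
      using a by blast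
    then show ?thesis using \<open>sr\<^sup>2 * _ \<le> _\<close> by linarith
  qed
qed (auto)



lemma max_inf:
  fixes f :: "'d \<Rightarrow> 'a::metric_space \<Rightarrow> real"
  assumes K: "compact K" "K \<noteq> {}" and D: "D \<noteq> {}"
    and cont: "\<And>d. d \<in> D \<Longrightarrow> continuous_on K (f d)"
    and nn: "\<And>d x. d \<in> D \<Longrightarrow> x \<in> K \<Longrightarrow> f d x \<ge> 0"
  shows "\<exists>x\<in>K. \<forall>y\<in>K. (INF d\<in>D. f d y) \<le> (INF d\<in>D. f d x)"
proof -
  define F where "F y = (INF d\<in>D. f d y)" for y
  obtain d0 where d0: "d0 \<in> D" using D by blast
  have bb: "bdd_below ((\<lambda>d. f d y) ` D)" if "y \<in> K" for y
    using nn that by (intro bdd_belowI[where m=0]) auto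
  have Fle: "F y \<le> f d y" if "y \<in> K" "d \<in> D" for y d
    unfolding F_def using bb[OF that(1)] that(2) by (rule cINF_lower)
  have "compact (f d0 ` K)" using cont[OF d0] K(1) by (rule compact_continuous_image)
  then have "bdd_above (f d0 ` K)" by (simp add: bounded_imp_bdd_above compact_imp_bounded)
  then obtain B where B: "\<And>y. y \<in> K \<Longrightarrow> f d0 y \<le> B" by (auto simp: bdd_above_def)
  have bdd: "bdd_above (F ` K)"
    using Fle[OF _ d0] B by (auto intro!: bdd_aboveI[where M=B] intro: order_trans)
  define S where "S = (SUP y\<in>K. F y)"
  have "\<exists>y\<in>K. S - inverse (real (Suc n)) < F y" for n
  proof -
    have "S - inverse (real (Suc n)) < S" by simp
    then show ?thesis unfolding S_def using less_cSUP_iff[OF K(2) bdd] by blast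
  qed
  then obtain x where x: "\<And>n. x n \<in> K" "\<And>n. S - inverse (real (Suc n)) < F (x n)" by metis
  obtain l r where l: "l \<in> K" "strict_mono r" "(x \<circ> r) \<longlonglongrightarrow> l"
    using compact_imp_seq_compact[OF K(1)] x(1) unfolding seq_compact_def by metis
  have "S \<le> f d l" if d: "d \<in> D" for d
  proof -
    have t1: "(\<lambda>n. f d ((x \<circ> r) n)) \<longlonglongrightarrow> f d l"
      by (rule continuous_on_tendsto_compose[OF cont[OF d] l(3) l(1)]) (simp add: x(1))
    have t2: "(\<lambda>n. S - inverse (real (Suc n))) \<longlonglongrightarrow> S - 0"
      by (intro tendsto_intros LIMSEQ_inverse_real_of_nat)
    have "S - inverse (real (Suc n)) \<le> f d ((x \<circ> r) n)" for n
    proof -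
      have "n \<le> r n" using l(2) by (rule seq_suble)
      then have "inverse (real (Suc (r n))) \<le> inverse (real (Suc n))"
        by (simp add: le_imp_inverse_le)
      moreover have "S - inverse (real (Suc (r n))) < F (x (r n))" by (rule x(2))
      moreover have "F (x (r n)) \<le> f d (x (r n))" by (rule Fle[OF x(1) d])
      ultimately show ?thesis unfolding comp_apply by linarith
    qed
    then have "S - 0 \<le> f d l" using t1 t2 by (intro LIMSEQ_le[OF t2 t1]) auto
    then show ?thesis by simp
  qed
  then have "S \<le> F l" unfolding F_def using D by (intro cINF_greatest) auto
  moreover have "F y \<le> S" if "y \<in> K" for y unfolding S_def using that bdd by (rule cSUP_upper)
  ultimately show ?thesis using l(1) unfolding F_def by (meson order_trans)
qed



lemma norm_axis_c: "norm (axis i (1::complex) :: complex^'n) = 1"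
proof -
  have "(norm (axis i (1::complex) :: complex^'n))\<^sup>2 = 1"
  proof -
    have "\<And>j. (cmod ((axis i (1::complex) :: complex^'n) $ j))\<^sup>2 = (if j = i then 1 else 0)"
      by (simp add: axis_def)
    then show ?thesis by (simp add: norm_sq_vec)
  qed
  then show ?thesis by (simp add: power2_eq_1_iff)
qed

definition diagv :: "real \<Rightarrow> real \<Rightarrow> complex^'n \<Rightarrow> complex^'n^'n \<Rightarrow> 'n \<Rightarrow> real" where
  "diagv Ps sr g W i = Ps * (cmod ((W *v g)$i))\<^sup>2 + sr\<^sup>2 * (\<Sum>j\<in>UNIV. (cmod (W$i$j))\<^sup>2)"

lemma feasible_alt: "feasible Ps Pr sr g W r \<longleftrightarrow> (\<forall>i. diagv Ps sr g W i \<le> Pr) \<and> norm r = 1"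
  unfolding feasible_def diag_formula diagv_def ..

lemma cont_diagv: "continuous_on UNIV (\<lambda>p :: (complex^'n^'n) \<times> 'b::topological_space. diagv Ps sr g (fst p) i)"
  unfolding diagv_def matrix_vector_mult_def
  by (simp add: continuous_intros)

lemma cont_sinr:
  assumes "sd > 0"
  shows "continuous_on K (\<lambda>p :: (complex^'n^'n) \<times> (complex^'m). sinr Ps sr sd Ht g (fst p) (snd p) dH)"
  unfolding sinr_def
proof (intro continuous_intros)
  show "continuous_on K (\<lambda>x. hinner (snd x) ((Ht + dH) ** fst x *v g))"
    unfolding hinner_def matrix_vector_mult_def matrix_matrix_mult_def
    by (simp add: continuous_intros)
  show "continuous_on K (\<lambda>x. hrow (snd x) ((Ht + dH) ** fst x))"
    unfolding hrow_def matrix_matrix_mult_def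
    by (intro continuous_intros)
next
  have "\<And>x::real. 0 < sr\<^sup>2 * x\<^sup>2 + sd\<^sup>2" using assms by (intro add_nonneg_pos) auto
  then show "\<forall>x\<in>K. sr\<^sup>2 * (norm (hrow (snd x) ((Ht + dH) ** fst x)))\<^sup>2 + sd\<^sup>2 \<noteq> 0"
    by (metis less_irrefl)
qed

lemma compact_K:
  assumes "sr > 0" "Ps \<ge> 0"
  shows "compact {p :: (complex^'n^'n) \<times> (complex^'m). feasible Ps Pr sr g (fst p) (snd p)}"
    (is "compact ?K")
proof (subst compact_eq_bounded_closed, rule conjI[rotated])
  have "?K = (\<Inter>i. {p. diagv Ps sr g (fst p) i \<le> Pr}) \<inter> {p. norm (snd p) = 1}"
    by (simp add: feasible_alt set_eq_iff)
  moreover have "closed {p :: (complex^'n^'n) \<times> (complex^'m). diagv Ps sr g (fst p) i \<le> Pr}" for i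
    by (rule closed_Collect_le[OF cont_diagv continuous_on_const]) 
  moreover have "closed {p :: (complex^'n^'n) \<times> (complex^'m). norm (snd p) = 1}"
    by (intro closed_Collect_eq continuous_intros)
  ultimately show "closed ?K" by (simp add: closed_INT closed_Int)
  let ?R = "real CARD('n) * sqrt (Pr / sr\<^sup>2) + 1"
  have "norm p \<le> ?R" if "p \<in> ?K" for p
  proof -
    have f: "\<forall>i. diagv Ps sr g (fst p) i \<le> Pr" "norm (snd p) = 1" using that by (auto simp: feasible_alt)
    have row: "norm (fst p $ i) \<le> sqrt (Pr / sr\<^sup>2)" for i
    proof -
      have "0 \<le> Ps * (cmod ((fst p *v g)$i))\<^sup>2" using assms by simp
      then have "sr\<^sup>2 * (norm (fst p $ i))\<^sup>2 \<le> Pr"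
        using f(1)[rule_format, of i] unfolding diagv_def norm_sq_vec
        by linarith
      then have "(norm (fst p $ i))\<^sup>2 \<le> Pr / sr\<^sup>2" using assms by (simp add: le_divide_eq mult.commute)
      then show ?thesis by (simp add: real_le_rsqrt)
    qed
    have "norm (fst p) \<le> (\<Sum>i\<in>UNIV. norm (fst p $ i))"
      unfolding norm_vec_def by (rule L2_set_le_sum) simp
    also have "\<dots> \<le> (\<Sum>i\<in>(UNIV::'n set). sqrt (Pr / sr\<^sup>2))" by (rule sum_mono) (rule row)
    finally have "norm (fst p) \<le> real CARD('n) * sqrt (Pr / sr\<^sup>2)" by simp
    moreover have "norm p \<le> norm (fst p) + norm (snd p)"
      using norm_Pair_le[of "fst p" "snd p"] by simp
    ultimately show ?thesis using f(2) by simp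
  qed
  then show "bounded ?K" unfolding bounded_iff by blast
qed



lemma outer_scale:
  assumes "c \<noteq> 0"
  shows "outer ((1/(norm g)\<^sup>2) *\<^sub>R v) g = c *\<^sub>R outer ((1/(c*(norm g)\<^sup>2)) *\<^sub>R v) g"
proof -
  have "(1/(norm g)\<^sup>2) *\<^sub>R a = c *\<^sub>R ((1/(c*(norm g)\<^sup>2)) *\<^sub>R a)" for a :: complex
    using assms by simp
  then show ?thesis
    using assms by (simp add: vec_eq_iff outer_def)
qed

theorem lemma1:
  fixes Ps Pr sigma_r sigma_d eps :: real
    and Ht :: "complex^'n^'m" and g :: "complex^'n"
  assumes "Ps > 0" and "Pr > 0" and "sigma_r > 0" and "sigma_d > 0" and "eps \<ge> 0"
    and "g \<noteq> 0"
  shows "\<exists>(W :: complex^'n^'n) (r :: complex^'m) (w :: complex^'n).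
           feasible Ps Pr sigma_r g W r
         \<and> W = (sqrt (Pr / (Ps * (norm g)\<^sup>2 + sigma_r\<^sup>2)) / norm g) *\<^sub>R outer w g
         \<and> (\<forall>(W' :: complex^'n^'n) (r' :: complex^'m). feasible Ps Pr sigma_r g W' r' \<longrightarrow>
               robust_sinr Ps sigma_r sigma_d eps Ht g W' r'
                 \<le> robust_sinr Ps sigma_r sigma_d eps Ht g W r)"
proof -
  define K where "K = {p :: (complex^'n^'n) \<times> (complex^'m). feasible Ps Pr sigma_r g (fst p) (snd p)}"
  define D where "D = {dH :: complex^'n^'m. frob_norm dH \<le> eps}"
  define f where "f d p = sinr Ps sigma_r sigma_d Ht g (fst p) (snd p) d" for d and p :: "(complex^'n^'n) \<times> (complex^'m)"
  have rob: "robust_sinr Ps sigma_r sigma_d eps Ht g W r = (INF d\<in>D. f d (W, r))" for W r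
    by (simp add: robust_sinr_def D_def f_def)
  have cK: "compact K" unfolding K_def using assms by (intro compact_K) auto
  have "(0, axis undefined 1) \<in> K"
    unfolding K_def using assms by (simp add: feasible_alt diagv_def norm_axis_c)
  then have neK: "K \<noteq> {}" by blast
  have "0 \<in> D" unfolding D_def frob_norm_def using assms by simp
  then have neD: "D \<noteq> {}" by blast
  have nn: "\<And>d W r. f d (W, r) \<ge> 0" unfolding f_def using assms by (simp add: nonneg_sinr)
  have "\<exists>x\<in>K. \<forall>y\<in>K. (INF d\<in>D. f d y) \<le> (INF d\<in>D. f d x)"
  proof (rule max_inf[OF cK neK neD])
    show "continuous_on K (f d)" for d unfolding f_def by (rule cont_sinr[OF assms(4)])
    show "0 \<le> f d y" for d y unfolding f_def using assms by (simp add: nonneg_sinr)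
  qed
  then obtain x where x: "x \<in> K" "\<forall>y\<in>K. (INF d\<in>D. f d y) \<le> (INF d\<in>D. f d x)"
    by blast
  obtain Ws rs where xs: "x = (Ws, rs)" by (cases x)
  define c where "c = sqrt (Pr / (Ps * (norm g)\<^sup>2 + sigma_r\<^sup>2)) / norm g"
  have "c > 0" unfolding c_def using assms by (simp add: add_pos_pos)
  define W0 where "W0 = outer ((1/(norm g)\<^sup>2) *\<^sub>R (Ws *v g)) g"
  define w where "w = (1/(c*(norm g)\<^sup>2)) *\<^sub>R (Ws *v g)"
  have feasWs: "feasible Ps Pr sigma_r g Ws rs" using x(1) unfolding K_def xs by simp
  have f0: "feasible Ps Pr sigma_r g W0 rs" unfolding W0_def by (rule feasible_proj[OF assms(6) feasWs])
  have eq: "W0 = c *\<^sub>R outer w g" unfolding W0_def w_def using \<open>c > 0\<close> by (intro outer_scale) simp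
  have mono: "(INF d\<in>D. f d (Ws, rs)) \<le> (INF d\<in>D. f d (W0, rs))"
  proof (rule cINF_mono[OF neD])
    show "bdd_below ((\<lambda>d. f d (Ws, rs)) ` D)" using nn by (intro bdd_belowI[where m=0]) auto
    fix m assume "m \<in> D"
    moreover have "f m (Ws, rs) \<le> f m (W0, rs)" unfolding f_def W0_def using assms
      by (simp add: sinr_proj)
    ultimately show "\<exists>n\<in>D. f n (Ws, rs) \<le> f m (W0, rs)" by blast
  qed
  show ?thesis
  proof (intro exI conjI allI impI)
    show "feasible Ps Pr sigma_r g W0 rs" by (rule f0)
    show "W0 = (sqrt (Pr / (Ps * (norm g)\<^sup>2 + sigma_r\<^sup>2)) / norm g) *\<^sub>R outer w g"
      using eq unfolding c_def .
    fix W' :: "complex^'n^'n" and r' :: "complex^'m" assume "feasible Ps Pr sigma_r g W' r'"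
    then have "(W', r') \<in> K" unfolding K_def by simp
    then have "(INF d\<in>D. f d (W', r')) \<le> (INF d\<in>D. f d (Ws, rs))" using x(2) xs by simp
    then show "robust_sinr Ps sigma_r sigma_d eps Ht g W' r' \<le> robust_sinr Ps sigma_r sigma_d eps Ht g W0 rs"
      unfolding rob using mono by linarith
  qed
qed

end
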